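(* Let $0<q<1$ and let $s_1,\dots,s_m$ be positive integers with $s_1>1$. Put $y_k:=\prod_{j=1}^k q^{1-s_j}$ for $1\le k\le m$. Then \[ \zeta[s_1,\dots,s_m] = \int \prod_{k=1}^m\bigg(\prod_{r=1}^{s_k-1}\frac{d_qt_r^{(k)}}{t_r^{(k)}}\bigg)\frac{d_qt_{s_k}^{(k)}}{y_k-t_{s_k}^{(k)}}, \] the iterated Jackson $q$-integral over the simplex $1>t_1^{(1)}>\cdots>t_{s_1}^{(1)}>\cdots>t_1^{(m)}>\cdots>t_{s_m}^{(m)}>0$.
   Context: Fix $0<q<1$ and $[x]_q := (1-q^x)/(1-q)$. For positive integers $s_1,\dots,s_m$ with $s_1>1$, $\zeta[s_1,\dots,s_m] := \sum_{k_1>\cdots>k_m>0}\prod_{j=1}^m q^{(s_j-1)k_j}/[k_j]_q^{s_j}$ (sum over positive integers). The Jackson $q$-integral is $\int_0^a g(t)\,d_qt := (1-q)a\sum_{j=0}^\infty q^j g(q^ja)$ for $a>0$. The integral over a simplex $a>u_1>u_2>\cdots>u_N>0$ of $g_1(u_1)d_qu_1\cdots g_N(u_N)d_qu_N$ means the iterated integral $\int_0^a g_1(u_1)\int_0^{u_1}g_2(u_2)\cdots\int_0^{u_{N-1}}g_N(u_N)\,d_qu_N\cdots d_qu_1$, with the variables $t_1^{(1)},\dots,t_{s_m}^{(m)}$ ordered as listed and $a=1$. *)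

theory Defs
  imports "HOL-Analysis.Analysis"
begin

definition qint :: "real \<Rightarrow> nat \<Rightarrow> real" where
  "qint q x = (1 - q ^ x) / (1 - q)"

definition qzeta :: "real \<Rightarrow> nat list \<Rightarrow> real" where
  "qzeta q s = (\<Sum>\<^sub>\<infinity> ks \<in> {ks. length ks = length s \<and> sorted_wrt (>) ks \<and> (\<forall>k\<in>set ks. 0 < k)}.
      (\<Prod>j<length s. q ^ ((s ! j - 1) * ks ! j) / (qint q (ks ! j)) ^ (s ! j)))"

definition jackson :: "real \<Rightarrow> real \<Rightarrow> (real \<Rightarrow> real) \<Rightarrow> real" where
  "jackson q a g = (1 - q) * a * (\<Sum>j. q ^ j * g (q ^ j * a))"

fun iter_jackson :: "real \<Rightarrow> real \<Rightarrow> (real \<Rightarrow> real) list \<Rightarrow> real" where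
  "iter_jackson q a [] = 1"
| "iter_jackson q a (g # gs) = jackson q a (\<lambda>u. g u * iter_jackson q u gs)"

end

theory Submission imports Defs begin

lemma nn_fubini:
  fixes f :: "'a \<times> 'b \<Rightarrow> real"
  assumes "\<And>x. x \<in> A \<Longrightarrow> ((\<lambda>y. f (x, y)) has_sum g x) (B x)"
    and "(g has_sum S) A"
    and "\<And>x y. x \<in> A \<Longrightarrow> y \<in> B x \<Longrightarrow> f (x, y) \<ge> 0"
  shows "(f has_sum S) (Sigma A B)"
proof (rule has_sum_SigmaI[OF assms(1,2)])
  show "f summable_on Sigma A B"
    by (rule summable_on_SigmaI[OF assms(1) _ assms(3)]) (use assms(2) has_sum_imp_summable in auto)
qed

lemma has_sum_cong_strong:
  assumes "\<And>x. x \<in> A \<Longrightarrow> f x = g x" and "S = T"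
  shows "(f has_sum S) A \<longleftrightarrow> (g has_sum T) A"
  using has_sum_cong[of A f g S] assms by simp

lemma geom_has_sum:
  fixes p :: real
  assumes "0 \<le> p" "p < 1"
  shows "((\<lambda>j. b * p ^ j) has_sum (b / (1 - p))) UNIV"
proof -
  have "(\<lambda>j. p ^ j) sums (1 / (1 - p))" using geometric_sums[of p] assms by simp
  hence "((\<lambda>j. p ^ j) has_sum (1 / (1 - p))) UNIV"
    by (rule sums_nonneg_imp_has_sum) (use assms in auto)
  from has_sum_cmult_right[OF this, of b] show ?thesis by simp
qed

lemma jackson_core:
  fixes q a :: real and b p :: "'i \<Rightarrow> real"
  assumes q: "0 < q" "q < 1"
    and b: "\<And>i. i \<in> I \<Longrightarrow> 0 \<le> b i"
    and p: "\<And>i. i \<in> I \<Longrightarrow> 0 \<le> p i \<and> p i \<le> q"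
    and hs: "\<And>j. ((\<lambda>i. b i * p i ^ j) has_sum (q ^ j * g (q ^ j * a))) I"
  shows "((\<lambda>i. (1 - q) * a * (b i / (1 - p i))) has_sum jackson q a g) I"
proof -
  define h where "h i = b i / (1 - p i)" for i
  have bs: "b summable_on I" using hs[of 0] by (auto dest: has_sum_imp_summable)
  have "(\<lambda>i. b i / (1 - q)) summable_on I"
    using has_sum_divide_const[OF has_sum_infsum[OF bs], of "1 - q"] by (auto dest: has_sum_imp_summable)
  have hsum: "h summable_on I"
  proof (rule summable_on_comparison_test[OF \<open>(\<lambda>i. b i / (1 - q)) summable_on I\<close>])
    fix i assume i: "i \<in> I"
    have "1 - q \<le> 1 - p i" "0 < 1 - q" using p[OF i] q by auto
    thus "h i \<le> b i / (1 - q)" unfolding h_def using b[OF i]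
      by (intro divide_left_mono) auto
    show "0 \<le> h i" unfolding h_def using b[OF i] p[OF i] q by auto
  qed
  define H where "H = infsum h I"
  have hH: "(h has_sum H) I" using hsum H_def by auto
  have inner: "((\<lambda>j. b i * p i ^ j) has_sum h i) UNIV" if "i \<in> I" for i
    unfolding h_def using p[OF that] q by (intro geom_has_sum) auto
  have tot: "((\<lambda>(i, j). b i * p i ^ j) has_sum H) (I \<times> UNIV)"
    using nn_fubini[where A=I and B="\<lambda>_. UNIV" and f="\<lambda>(i,j). b i * p i ^ j" and g=h and S=H] inner hH b p by auto
  hence "((\<lambda>(j, i). b i * p i ^ j) has_sum H) (UNIV \<times> I)"
    by (subst (asm) has_sum_swap) (simp add: case_prod_unfold)
  hence "((\<lambda>j. q ^ j * g (q ^ j * a)) has_sum H) UNIV"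
    using has_sum_SigmaD[where f="\<lambda>(j, i). b i * p i ^ j" and S=H and A=UNIV and B="\<lambda>_. I"] hs by auto
  hence "(\<lambda>j. q ^ j * g (q ^ j * a)) sums H" by (rule has_sum_imp_sums)
  hence "jackson q a g = (1 - q) * a * H" unfolding jackson_def by (simp add: sums_iff)
  thus ?thesis using has_sum_cmult_right[OF hH, of "(1 - q) * a"] unfolding h_def by simp
qed

lemma jackson_div:
  fixes q a :: real and c :: "'i \<Rightarrow> real" and e :: "'i \<Rightarrow> nat"
  assumes q: "0 < q" "q < 1" and a: "0 < a"
    and hyp: "\<And>u. 0 < u \<Longrightarrow> u \<le> a \<Longrightarrow> ((\<lambda>i. c i * u ^ e i) has_sum F u) I"
    and c: "\<And>i. i \<in> I \<Longrightarrow> 0 \<le> c i"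
    and e: "\<And>i. i \<in> I \<Longrightarrow> 1 \<le> e i"
  shows "((\<lambda>i. c i * ((1 - q) / (1 - q ^ e i)) * a ^ e i) has_sum jackson q a (\<lambda>t. 1 / t * F t)) I"
proof -
  have "((\<lambda>i. (1 - q) * a * (c i * a ^ (e i - 1) / (1 - q ^ e i))) has_sum jackson q a (\<lambda>t. 1 / t * F t)) I"
  proof (rule jackson_core[OF q])
    show "0 \<le> c i * a ^ (e i - 1)" if "i \<in> I" for i using c[OF that] a by simp
    show "0 \<le> q ^ e i \<and> q ^ e i \<le> q" if "i \<in> I" for i
      using power_decreasing[of 1 "e i" q] e[OF that] q by auto
    fix j :: nat
    have u: "0 < q ^ j * a" "q ^ j * a \<le> a"
      using q a by (auto simp: power_le_one mult_left_le_one_le)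
    have "((\<lambda>i. c i * (q ^ j * a) ^ e i / a) has_sum (F (q ^ j * a) / a)) I"
      by (rule has_sum_divide_const[OF hyp[OF u]])
    also have "?this \<longleftrightarrow> ((\<lambda>i. c i * a ^ (e i - 1) * (q ^ e i) ^ j) has_sum (q ^ j * (1 / (q ^ j * a) * F (q ^ j * a)))) I"
    proof (rule has_sum_cong_strong)
      show "c i * (q ^ j * a) ^ e i / a = c i * a ^ (e i - 1) * (q ^ e i) ^ j" if "i \<in> I" for i
      proof -
        have "a ^ e i = a * a ^ (e i - 1)" using e[OF that]
          by (metis Suc_diff_le diff_Suc_1 power_Suc)
        thus ?thesis using a by (simp add: power_mult_distrib power_mult[symmetric] mult.commute)
      qed
      show "F (q ^ j * a) / a = q ^ j * (1 / (q ^ j * a) * F (q ^ j * a))" using q a by simp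
    qed
    finally show "((\<lambda>i. c i * a ^ (e i - 1) * (q ^ e i) ^ j) has_sum (q ^ j * (1 / (q ^ j * a) * F (q ^ j * a)))) I" .
  qed
  also have "?this \<longleftrightarrow> ?thesis"
  proof (rule has_sum_cong_strong)
    show "(1 - q) * a * (c i * a ^ (e i - 1) / (1 - q ^ e i)) = c i * ((1 - q) / (1 - q ^ e i)) * a ^ e i"
      if "i \<in> I" for i
    proof -
      have "a ^ e i = a * a ^ (e i - 1)" using e[OF that]
        by (metis Suc_diff_le diff_Suc_1 power_Suc)
      thus ?thesis by simp
    qed
  qed simp
  finally show ?thesis .
qed

lemma pow_pred: "0 < n \<Longrightarrow> (x::real) ^ n = x * x ^ (n - 1)"
  by (cases n) auto

lemma jackson_y:
  fixes q a y :: real and c :: "'i \<Rightarrow> real" and e :: "'i \<Rightarrow> nat"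
  assumes q: "0 < q" "q < 1" and a: "0 < a" and y: "a < y"
    and hyp: "\<And>u. 0 < u \<Longrightarrow> u \<le> a \<Longrightarrow> ((\<lambda>i. c i * u ^ e i) has_sum F u) I"
    and c: "\<And>i. i \<in> I \<Longrightarrow> 0 \<le> c i"
  shows "((\<lambda>(i, n). c i * (1 / y) ^ (n - e i) * ((1 - q) / (1 - q ^ n)) * a ^ n)
           has_sum jackson q a (\<lambda>t. 1 / (y - t) * F t)) (Sigma I (\<lambda>i. {e i<..}))"
proof -
  let ?K = "Sigma I (\<lambda>i. {e i<..})"
  let ?b = "\<lambda>(i, n). c i * (1 / y) ^ (n - e i) * a ^ (n - 1)"
  let ?p = "\<lambda>(i, n::nat). q ^ n"
  have "((\<lambda>k. (1 - q) * a * (?b k / (1 - ?p k))) has_sum jackson q a (\<lambda>t. 1 / (y - t) * F t)) ?K"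
  proof (rule jackson_core[OF q])
    show "0 \<le> ?b k" if "k \<in> ?K" for k using that c a y by (auto simp: case_prod_unfold)
    show "0 \<le> ?p k \<and> ?p k \<le> q" if "k \<in> ?K" for k
      using that power_decreasing[of 1 "snd k" q] q by (auto simp: case_prod_unfold)
    fix j :: nat
    define u where "u = q ^ j * a"
    have u: "0 < u" "u \<le> a"
      using q a by (auto simp: u_def power_le_one mult_left_le_one_le)
    define z where "z = u / y"
    have z: "norm z < 1" "0 \<le> z" using u y by (auto simp: z_def)
    define g where "g i = c i * u ^ e i * (q ^ j / (y - u))" for i
    show "((\<lambda>k. ?b k * ?p k ^ j) has_sum (q ^ j * (1 / (y - q ^ j * a) * F (q ^ j * a)))) ?K"
    proof (rule nn_fubini[where g = g])
      fix i assume i: "i \<in> I"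
      have "((\<lambda>r. c i * u ^ e i / a * z ^ r) has_sum (c i * u ^ e i / a * (z / (1 - z)))) {1..}"
        by (rule has_sum_cmult_right[OF has_sum_geometric_from_1[OF z(1)]])
      also have "?this \<longleftrightarrow> ((\<lambda>n. ?b (i, n) * ?p (i, n) ^ j) has_sum g i) {e i<..}"
      proof (rule has_sum_reindex_bij_witness[of _ "\<lambda>n. n - e i" "\<lambda>r. e i + r"])
        fix r :: nat assume "r \<in> {1..}"
        hence r: "0 < r" by auto
        have A: "a ^ (e i + r) = a * a ^ (e i + r - 1)" using r by (intro pow_pred) auto
        have B: "u ^ e i * z ^ r = (q ^ (e i + r)) ^ j * a ^ (e i + r) / y ^ r"
          unfolding u_def z_def
          by (simp add: power_mult_distrib power_divide power_add power_mult[symmetric] mult_ac)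
        have "c i * u ^ e i / a * z ^ r = c i * ((u ^ e i * z ^ r) / a)" by simp
        also have "\<dots> = c i * ((q ^ (e i + r)) ^ j * a ^ (e i + r - 1) / y ^ r)"
          unfolding B A using a by simp
        also have "\<dots> = ?b (i, e i + r) * ?p (i, e i + r) ^ j"
          by (simp add: power_divide)
        finally show "?b (i, e i + r) * ?p (i, e i + r) ^ j = c i * u ^ e i / a * z ^ r" by simp
      next
        show "c i * u ^ e i / a * (z / (1 - z)) = g i"
          using a y u by (simp add: g_def z_def u_def field_simps)
      qed auto
      finally show "((\<lambda>n. ?b (i, n) * ?p (i, n) ^ j) has_sum g i) {e i<..}" .
    next
      have "((\<lambda>i. c i * u ^ e i * (q ^ j / (y - u))) has_sum (F u * (q ^ j / (y - u)))) I"
        by (rule has_sum_cmult_left[OF hyp[OF u]])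
      moreover have "F u * (q ^ j / (y - u)) = q ^ j * (1 / (y - q ^ j * a) * F (q ^ j * a))"
        by (simp add: u_def)
      ultimately show "(g has_sum (q ^ j * (1 / (y - q ^ j * a) * F (q ^ j * a)))) I"
        unfolding g_def by simp
    next
      fix i n assume "i \<in> I" "n \<in> {e i<..}"
      thus "0 \<le> ?b (i, n) * ?p (i, n) ^ j" using c a y q by auto
    qed
  qed
  also have "?this \<longleftrightarrow> ?thesis"
  proof (rule has_sum_cong_strong)
    fix k assume "k \<in> ?K"
    then obtain i n where k: "k = (i, n)" "n > e i" by auto
    hence "a ^ n = a * a ^ (n - 1)" by (intro pow_pred) auto
    thus "(1 - q) * a * (?b k / (1 - ?p k)) =
      (case k of (i, n) \<Rightarrow> c i * (1 / y) ^ (n - e i) * ((1 - q) / (1 - q ^ n)) * a ^ n)"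
      using k by simp
  qed simp
  finally show ?thesis .
qed

definition hd0 :: "nat list \<Rightarrow> nat" where
  "hd0 ns = (case ns of [] \<Rightarrow> 0 | n # _ \<Rightarrow> n)"

definition Dec :: "nat \<Rightarrow> nat list set" where
  "Dec m = {ks. length ks = m \<and> sorted_wrt (>) ks \<and> (\<forall>k\<in>set ks. 0 < k)}"

fun W :: "real \<Rightarrow> (nat \<times> real) list \<Rightarrow> nat list \<Rightarrow> real" where
  "W q [] [] = 1"
| "W q ((s, y) # P) (n # ns) = (1 / y) ^ (n - hd0 ns) / qint q n ^ s * W q P ns"
| "W q _ _ = 0"

definition blockf :: "nat \<times> real \<Rightarrow> (real \<Rightarrow> real) list" where
  "blockf p = replicate (fst p - 1) (\<lambda>t. 1 / t) @ [\<lambda>t. 1 / (snd p - t)]"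

lemma Dec_0: "Dec 0 = {[]}" by (auto simp: Dec_def)

lemma Dec_Cons: "(n # ns \<in> Dec (Suc m)) \<longleftrightarrow> ns \<in> Dec m \<and> hd0 ns < n"
proof (cases ns)
  case Nil thus ?thesis by (auto simp: Dec_def hd0_def)
next
  case (Cons x xs)
  thus ?thesis by (auto simp: Dec_def hd0_def)
qed

lemma Dec_nonempty: "l \<in> Dec (Suc m) \<Longrightarrow> l = hd l # tl l"
  by (cases l) (auto simp: Dec_def)

lemma qint_nonneg: "0 < q \<Longrightarrow> q < 1 \<Longrightarrow> 0 \<le> qint q n"
  unfolding qint_def by (intro divide_nonneg_nonneg) (auto intro!: power_le_one)

lemma W_nonneg:
  "0 < q \<Longrightarrow> q < 1 \<Longrightarrow> \<forall>p\<in>set P. 0 < snd p \<Longrightarrow> 0 \<le> W q P ns"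
proof (induction q P ns rule: W.induct)
  case (2 q s y P n ns)
  have "0 \<le> qint q n" using 2 by (intro qint_nonneg) auto
  thus ?case using 2 by simp
qed auto

lemma jackson_rep:
  fixes c :: "'i \<Rightarrow> real" and e :: "'i \<Rightarrow> nat"
  assumes q: "0 < q" "q < 1"
    and hyp: "\<And>u. 0 < u \<Longrightarrow> u \<le> 1 \<Longrightarrow> ((\<lambda>i. c i * u ^ e i) has_sum iter_jackson q u L) I"
    and c: "\<And>i. i \<in> I \<Longrightarrow> 0 \<le> c i"
    and e: "\<And>i. i \<in> I \<Longrightarrow> 1 \<le> e i"
  shows "0 < u \<Longrightarrow> u \<le> 1 \<Longrightarrow>
    ((\<lambda>i. c i * ((1 - q) / (1 - q ^ e i)) ^ k * u ^ e i) has_sum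
       iter_jackson q u (replicate k (\<lambda>t. 1 / t) @ L)) I"
proof (induction k arbitrary: u)
  case 0 thus ?case using hyp by simp
next
  case (Suc k)
  have r: "0 \<le> (1 - q) / (1 - q ^ e i)" for i using q by (simp add: power_le_one)
  have "((\<lambda>i. (c i * ((1 - q) / (1 - q ^ e i)) ^ k) * ((1 - q) / (1 - q ^ e i)) * u ^ e i) has_sum
     jackson q u (\<lambda>t. 1 / t * iter_jackson q t (replicate k (\<lambda>t. 1 / t) @ L))) I"
    by (rule jackson_div[OF q Suc.prems(1)]) (use Suc c e r in auto)
  thus ?case by (simp add: mult_ac)
qed

lemma main:
  assumes q: "0 < q" "q < 1" and P: "\<forall>p\<in>set P. 1 \<le> fst p \<and> 1 < snd p"
  shows "0 < a \<Longrightarrow> a \<le> 1 \<Longrightarrow>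
    ((\<lambda>ns. W q P ns * a ^ hd0 ns) has_sum iter_jackson q a (concat (map blockf P))) (Dec (length P))"
  using P
proof (induction P arbitrary: a)
  case Nil
  have "((\<lambda>ns. W q [] ns * a ^ hd0 ns) has_sum (\<Sum>ns\<in>{[]}. W q [] ns * a ^ hd0 ns)) {[]}"
    by (rule has_sum_finite) simp
  thus ?case by (simp add: Dec_0 hd0_def)
next
  case (Cons p P')
  obtain s y where p: "p = (s, y)" by (cases p)
  have s: "1 \<le> s" and y: "1 < y" using Cons.prems p by auto
  have P': "\<forall>p\<in>set P'. 1 \<le> fst p \<and> 1 < snd p" using Cons.prems by auto
  note IH = Cons.IH[OF _ _ P']
  define R where "R = concat (map blockf P')"
  let ?K = "Sigma (Dec (length P')) (\<lambda>ns. {hd0 ns<..})"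
  define cK where "cK k = (case k of (ns, n) \<Rightarrow> W q P' ns * (1 / y) ^ (n - hd0 ns) * ((1 - q) / (1 - q ^ n)))" for k
  have Wnn: "0 \<le> W q P' ns" for ns using W_nonneg[OF q] P' by force
  have step1: "((\<lambda>k. cK k * u ^ snd k) has_sum iter_jackson q u ((\<lambda>t. 1 / (y - t)) # R)) ?K"
    if u: "0 < u" "u \<le> 1" for u
  proof -
    have "((\<lambda>(ns, n). W q P' ns * (1 / y) ^ (n - hd0 ns) * ((1 - q) / (1 - q ^ n)) * u ^ n)
           has_sum jackson q u (\<lambda>t. 1 / (y - t) * iter_jackson q t R)) ?K"
      by (rule jackson_y[OF q u(1)]) (use u y IH Wnn in \<open>auto simp: R_def\<close>)
    thus ?thesis by (simp add: cK_def case_prod_unfold)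
  qed
  have step2: "((\<lambda>k. cK k * ((1 - q) / (1 - q ^ snd k)) ^ (s - 1) * u ^ snd k) has_sum
       iter_jackson q u (replicate (s - 1) (\<lambda>t. 1 / t) @ ((\<lambda>t. 1 / (y - t)) # R))) ?K"
    if u: "0 < u" "u \<le> 1" for u
  proof (rule jackson_rep[OF q step1 _ _ u])
    show "0 \<le> cK k" if "k \<in> ?K" for k
    proof -
      have "0 \<le> (1 - q) / (1 - q ^ snd k)" using q by (auto intro!: divide_nonneg_nonneg power_le_one)
      moreover have "0 \<le> W q P' (fst k) * (1 / y) ^ (snd k - hd0 (fst k))" using Wnn y by simp
      ultimately show ?thesis unfolding cK_def case_prod_unfold using mult_nonneg_nonneg by blast
    qed
    show "1 \<le> snd k" if "k \<in> ?K" for k using that by auto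
  qed
  show ?case
  proof -
    have "concat (map blockf (p # P')) = replicate (s - 1) (\<lambda>t. 1 / t) @ ((\<lambda>t. 1 / (y - t)) # R)"
      by (simp add: p blockf_def R_def)
    moreover have "((\<lambda>k. cK k * ((1 - q) / (1 - q ^ snd k)) ^ (s - 1) * a ^ snd k) has_sum
       iter_jackson q a (replicate (s - 1) (\<lambda>t. 1 / t) @ ((\<lambda>t. 1 / (y - t)) # R))) ?K
      \<longleftrightarrow> ((\<lambda>ns. W q (p # P') ns * a ^ hd0 ns) has_sum
       iter_jackson q a (replicate (s - 1) (\<lambda>t. 1 / t) @ ((\<lambda>t. 1 / (y - t)) # R))) (Dec (length (p # P')))"
    proof (rule has_sum_reindex_bij_witness[where j = "\<lambda>(ns, n). n # ns" and i = "\<lambda>l. (tl l, hd l)"])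
      fix k assume k: "k \<in> ?K"
      then obtain ns n where kk: "k = (ns, n)" "ns \<in> Dec (length P')" "hd0 ns < n" by auto
      show "(case k of (ns, n) \<Rightarrow> n # ns) \<in> Dec (length (p # P'))"
        using kk Dec_Cons by simp
      show "(tl (case k of (ns, n) \<Rightarrow> n # ns), hd (case k of (ns, n) \<Rightarrow> n # ns)) = k"
        using kk by simp
      have n1: "0 < n" using kk by simp
      have qn: "q ^ n < 1" using q n1 by (simp add: power_less_one_iff)
      define r where "r = (1 - q) / (1 - q ^ n)"
      have eq: "1 / qint q n ^ s = r * r ^ (s - 1)"
        using s unfolding r_def by (simp add: qint_def power_divide flip: power_Suc)
      have "W q (p # P') (n # ns) * a ^ hd0 (n # ns) = (1 / y) ^ (n - hd0 ns) * W q P' ns * a ^ n * (1 / qint q n ^ s)"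
        by (simp add: p hd0_def)
      also have "\<dots> = cK k * r ^ (s - 1) * a ^ n"
        unfolding eq using kk by (simp add: cK_def r_def mult_ac)
      finally show "W q (p # P') (case k of (ns, n) \<Rightarrow> n # ns) * a ^ hd0 (case k of (ns, n) \<Rightarrow> n # ns) =
            cK k * ((1 - q) / (1 - q ^ snd k)) ^ (s - 1) * a ^ snd k"
        using kk by (simp add: r_def)
    next
      fix l assume l: "l \<in> Dec (length (p # P'))"
      hence l': "l = hd l # tl l" using Dec_nonempty by auto
      show "(case (tl l, hd l) of (ns, n) \<Rightarrow> n # ns) = l" using l' by simp
      show "(tl l, hd l) \<in> ?K" using l l' Dec_Cons[of "hd l" "tl l" "length P'"] by auto
    qed simp
    ultimately show ?thesis using step2[OF Cons.prems(1,2)] by simp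
  qed
qed

definition PP :: "real \<Rightarrow> nat \<Rightarrow> nat list \<Rightarrow> (nat \<times> real) list" where
  "PP q \<sigma> ss = map (\<lambda>k. (ss ! k, 1 / q ^ (\<sigma> + (\<Sum>j\<le>k. ss ! j - 1)))) [0..<length ss]"

lemma PP_Cons: "PP q \<sigma> (s # ss) = (s, 1 / q ^ (\<sigma> + (s - 1))) # PP q (\<sigma> + (s - 1)) ss"
proof -
  have "[0..<length (s # ss)] = 0 # map Suc [0..<length ss]"
    by (simp add: upt_conv_Cons map_Suc_upt del: upt_Suc)
  moreover have "(\<Sum>j\<le>Suc k. (s # ss) ! j - 1) = (s - 1) + (\<Sum>j\<le>k. ss ! j - 1)" for k
    by (subst sum.atMost_Suc_shift) simp
  ultimately show ?thesis unfolding PP_def by (simp add: add.assoc)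
qed

lemma W_formula:
  assumes q: "0 < q"
  shows "ns \<in> Dec (length ss) \<Longrightarrow> W q (PP q \<sigma> ss) ns =
    q ^ (\<sigma> * hd0 ns) * (\<Prod>j<length ss. q ^ ((ss ! j - 1) * ns ! j) / qint q (ns ! j) ^ (ss ! j))"
proof (induction ss arbitrary: \<sigma> ns)
  case Nil
  hence "ns = []" by (simp add: Dec_0)
  thus ?case by (simp add: PP_def hd0_def)
next
  case (Cons s ss)
  obtain n ns' where ns: "ns = n # ns'" using Dec_nonempty Cons.prems by fastforce
  have ns': "ns' \<in> Dec (length ss)" "hd0 ns' < n" using Cons.prems ns Dec_Cons by auto
  define \<tau> where "\<tau> = \<sigma> + (s - 1)"
  have IH: "W q (PP q \<tau> ss) ns' = q ^ (\<tau> * hd0 ns') * (\<Prod>j<length ss. q ^ ((ss ! j - 1) * ns' ! j) / qint q (ns' ! j) ^ (ss ! j))"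
    by (rule Cons.IH[OF ns'(1)])
  have pw: "(1 / (1 / q ^ \<tau>)) ^ (n - hd0 ns') * q ^ (\<tau> * hd0 ns') = q ^ (\<sigma> * n) * q ^ ((s - 1) * n)"
  proof -
    have "(1 / (1 / q ^ \<tau>)) ^ (n - hd0 ns') * q ^ (\<tau> * hd0 ns') = q ^ (\<tau> * (n - hd0 ns') + \<tau> * hd0 ns')"
      by (simp add: power_add power_mult)
    also have "\<tau> * (n - hd0 ns') + \<tau> * hd0 ns' = \<sigma> * n + (s - 1) * n"
    proof -
      have "\<tau> * (n - hd0 ns') + \<tau> * hd0 ns' = \<tau> * (n - hd0 ns' + hd0 ns')"
        by (simp only: add_mult_distrib2)
      also have "n - hd0 ns' + hd0 ns' = n" using ns'(2) by simp
      finally show ?thesis unfolding \<tau>_def by (simp add: add_mult_distrib)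
    qed
    finally show ?thesis by (simp add: power_add)
  qed
  have "W q (PP q \<sigma> (s # ss)) ns = (1 / (1 / q ^ \<tau>)) ^ (n - hd0 ns') / qint q n ^ s * W q (PP q \<tau> ss) ns'"
    by (simp add: PP_Cons ns \<tau>_def)
  also have "\<dots> = ((1 / (1 / q ^ \<tau>)) ^ (n - hd0 ns') * q ^ (\<tau> * hd0 ns')) / qint q n ^ s *
      (\<Prod>j<length ss. q ^ ((ss ! j - 1) * ns' ! j) / qint q (ns' ! j) ^ (ss ! j))"
    unfolding IH by simp
  also have "\<dots> = q ^ (\<sigma> * hd0 ns) * (\<Prod>j<length (s # ss). q ^ (((s # ss) ! j - 1) * ns ! j) / qint q (ns ! j) ^ ((s # ss) ! j))"
    unfolding pw by (simp add: prod.lessThan_Suc_shift ns hd0_def del: prod.lessThan_Suc)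
  finally show ?case .
qed

lemma s_ge1: "\<forall>x\<in>set s. 0 < x \<Longrightarrow> k < length s \<Longrightarrow> 1 \<le> (s :: nat list) ! k"
proof -
  assume a: "\<forall>x\<in>set s. 0 < x" "k < length s"
  have "s ! k \<in> set s" using a(2) by (rule nth_mem)
  hence "0 < s ! k" using a(1) by blast
  thus ?thesis by simp
qed

lemma powi_factor:
  assumes "0 < (q::real)" "1 \<le> n"
  shows "q powi (1 - int n) = 1 / q ^ (n - 1)"
proof -
  have "1 - int n = - int (n - 1)" using assms(2) by simp
  hence "q powi (1 - int n) = inverse (q powi int (n - 1))"
    by (simp only: power_int_minus)
  also have "\<dots> = inverse (q ^ (n - 1))" by (simp only: power_int_of_nat)
  finally show ?thesis by (simp only: inverse_eq_divide)
qed

lemma Y_eq0: "(\<Prod>j\<le>(k::nat). 1 / (q::real) ^ (f j :: nat)) = 1 / q ^ (\<Sum>j\<le>k. f j)"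
  by (induction k) (simp_all add: power_add)

lemma Y_eq:
  fixes q :: real and s :: "nat list"
  assumes q: "0 < q" and s: "\<forall>x\<in>set s. 0 < x" and k: "k < length s"
  shows "(\<Prod>j\<le>k. q powi (1 - int (s ! j))) = 1 / q ^ (\<Sum>j\<le>k. s ! j - 1)"
proof -
  have "(\<Prod>j\<le>k. q powi (1 - int (s ! j))) = (\<Prod>j\<le>k. 1 / q ^ (s ! j - 1))"
  proof (rule prod.cong[OF refl])
    fix j assume "j \<in> {..k}"
    hence "j < length s" using k by simp
    thus "q powi (1 - int (s ! j)) = 1 / q ^ (s ! j - 1)"
      by (intro powi_factor[OF q] s_ge1[OF s])
  qed
  thus ?thesis by (simp only: Y_eq0)
qed

theorem corollary6p4:
  fixes q :: real and s :: "nat list"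
  assumes "0 < q" and "q < 1"
    and "s \<noteq> []" and "\<forall>j\<in>set s. 0 < j" and "s ! 0 > 1"
  shows "qzeta q s =
    iter_jackson q 1
      (concat (map (\<lambda>k. replicate (s ! k - 1) (\<lambda>t. 1 / t)
                     @ [\<lambda>t. 1 / ((\<Prod>j\<le>k. q powi (1 - int (s ! j))) - t)])
                   [0..<length s]))"
proof -
  note q = assms(1,2)
  define P where "P = PP q 0 s"
  have list: "map (\<lambda>k. replicate (s ! k - 1) (\<lambda>t. 1 / t)
                     @ [\<lambda>t. 1 / ((\<Prod>j\<le>k. q powi (1 - int (s ! j))) - t)]) [0..<length s]
     = map blockf P"
    unfolding P_def PP_def map_map
    by (rule map_cong[OF refl]) (use Y_eq[OF q(1) assms(4)] in \<open>auto simp: blockf_def simp del: power_int_def\<close>)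
  have Pok: "\<forall>p\<in>set P. 1 \<le> fst p \<and> 1 < snd p"
  proof
    fix p assume "p \<in> set P"
    then obtain k where k: "k < length s" "p = (s ! k, 1 / q ^ (\<Sum>j\<le>k. s ! j - 1))"
      unfolding P_def PP_def by auto
    have "1 \<le> s ! k" using assms(4) k(1) by (rule s_ge1)
    moreover have "s ! 0 - 1 \<le> (\<Sum>j\<le>k. s ! j - 1)"
      by (rule member_le_sum) auto
    hence "1 \<le> (\<Sum>j\<le>k. s ! j - 1)" using assms(5) by linarith
    hence "q ^ (\<Sum>j\<le>k. s ! j - 1) < 1" using q by (simp add: power_less_one_iff)
    hence "1 < 1 / q ^ (\<Sum>j\<le>k. s ! j - 1)" using q by (simp add: less_divide_eq)
    ultimately show "1 \<le> fst p \<and> 1 < snd p" using k by simp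
  qed
  have lenP: "length P = length s" by (simp add: P_def PP_def)
  have hs: "((\<lambda>ns. W q P ns * 1 ^ hd0 ns) has_sum iter_jackson q 1 (concat (map blockf P))) (Dec (length s))"
    using main[OF q Pok, of 1] lenP by simp
  have "qzeta q s = infsum (\<lambda>ns. W q P ns * 1 ^ hd0 ns) (Dec (length s))"
    unfolding qzeta_def Dec_def[symmetric]
    by (rule infsum_cong) (simp add: P_def W_formula[OF q(1)])
  also have "\<dots> = iter_jackson q 1 (concat (map blockf P))" using hs by (rule infsumI)
  finally show ?thesis unfolding list .
qed

end
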